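(* Let $n\ge4$. The unique $S_n$-submodule of $\mathcal{L}_n$ isomorphic to $\{n-2,2\}$ is $$W_n:=\{Q=(q_{ij})\in\mathcal{L}_n: Q=Q^T,\ q_{ii}=0\ \forall i\},$$ and moreover $W_n=\operatorname{span}_{\mathbb{R}}\big(L_{(ij)(kl)}-L_{(ik)(jl)}: i,j,k,l\in[n]\text{ pairwise distinct}\big)$.
   Context: Let $\mathbf{1}\in\mathbb{R}^n$ be the all-ones column vector and $\mathcal{L}_n=\{Q\in \mathrm{Mat}_n(\mathbb{R}): Q\mathbf{1}=0\}$. For $\sigma\in S_n$, $K_\sigma$ is the permutation matrix with $e_iK_\sigma=e_{\sigma(i)}$ and $L_\sigma:=K_\sigma-I_n$. $S_n$ acts on $\mathcal{L}_n$ by $\sigma\cdot X=K_\sigma^TXK_\sigma$. $\{n-2,2\}$ denotes the irreducible real $S_n$-module labelled by the partition $(n-2,2)$; it occurs with multiplicity one in $\mathcal{L}_n$ for $n\ge4$. *)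

theory Defs
  imports "HOL-Analysis.Analysis" "HOL-Combinatorics.Transposition"
begin

text \<open>Matrices in Mat_n(R) are modelled as real^'n^'n, with the finite type 'n of
  cardinality n playing the role of [n].\<close>

definition ones :: "real^'n" where "ones = (\<chi> i. 1)"

definition Lspace :: "(real^'n^'n) set" where
  "Lspace = {Q. Q *v ones = 0}"

definition Kmat :: "('n \<Rightarrow> 'n) \<Rightarrow> real^'n^'n" where
  "Kmat \<sigma> = (\<chi> i j. if \<sigma> i = j then 1 else 0)"

definition Lmat :: "('n \<Rightarrow> 'n) \<Rightarrow> real^'n^'n" where
  "Lmat \<sigma> = Kmat \<sigma> - mat 1"

definition act :: "('n \<Rightarrow> 'n) \<Rightarrow> real^'n^'n \<Rightarrow> real^'n^'n" where
  "act \<sigma> X = Finite_Cartesian_Product.transpose (Kmat \<sigma>) ** X ** Kmat \<sigma>"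

definition Wn :: "(real^'n^'n) set" where
  "Wn = {Q \<in> Lspace. Finite_Cartesian_Product.transpose Q = Q \<and> (\<forall>i. Q $ i $ i = 0)}"

definition Sn_submodule :: "(real^'n^'n) set \<Rightarrow> bool" where
  "Sn_submodule U \<longleftrightarrow> subspace U \<and> U \<subseteq> Lspace \<and>
     (\<forall>\<sigma>. \<sigma> permutes (UNIV::'n set) \<longrightarrow> (\<forall>X\<in>U. act \<sigma> X \<in> U))"

text \<open>The irreducible module {n-2,2}, realised as the Specht module S^(n-2,2)
  inside the permutation module on 2-subsets of [n] (vectors indexed by subsets of 'n,
  supported on 2-subsets), spanned by the polytabloids of the tableaux with columns
  (a,i),(b,j): {i,j} - {a,j} - {i,b} + {a,b}.\<close>

definition tabloid :: "'n::finite set \<Rightarrow> real^('n set)" where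
  "tabloid T = (\<chi> S. if S = T then 1 else 0)"

definition polytabloid :: "'n::finite \<Rightarrow> 'n \<Rightarrow> 'n \<Rightarrow> 'n \<Rightarrow> real^('n set)" where
  "polytabloid a b i j = tabloid {i,j} - tabloid {a,j} - tabloid {i,b} + tabloid {a,b}"

definition specht :: "(real^('n::finite set)) set" where
  "specht = span {polytabloid a b i j | a b i j. distinct [a,b,i,j]}"

text \<open>S_n action on the permutation module: (sigma f)(S) = f(sigma^-1 S), matching
  (sigma X)_{ij} = X_{sigma^-1 i, sigma^-1 j} on matrices.\<close>
definition act2 :: "('n::finite \<Rightarrow> 'n) \<Rightarrow> real^('n set) \<Rightarrow> real^('n set)" where
  "act2 \<sigma> f = (\<chi> S. f $ (inv \<sigma> ` S))"

definition iso_to_specht :: "(real^'n::finite^'n) set \<Rightarrow> bool" where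
  "iso_to_specht U \<longleftrightarrow> (\<exists>\<phi>. linear \<phi> \<and> bij_betw \<phi> U (specht :: (real^('n set)) set) \<and>
     (\<forall>\<sigma>. \<sigma> permutes (UNIV::'n set) \<longrightarrow> (\<forall>X\<in>U. \<phi> (act \<sigma> X) = act2 \<sigma> (\<phi> X))))"

end

theory Submission imports Defs begin

lemma Kmat_nth[simp]: "Kmat \<sigma> $ a $ b = (if \<sigma> a = b then 1 else 0)"
  by (simp add: Kmat_def)

lemma act_nth:
  assumes "\<sigma> permutes (UNIV::'n::finite set)"
  shows "act \<sigma> X $ i $ j = X $ inv \<sigma> i $ inv \<sigma> j"
proof -
  have b: "bij \<sigma>" using assms permutes_bij by blast
  have e1: "\<And>a i. (\<sigma> a = i) = (a = inv \<sigma> i)" using b by (metis bij_inv_eq_iff)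
  have "(Finite_Cartesian_Product.transpose (Kmat \<sigma>) ** X) $ i $ b = X $ inv \<sigma> i $ b" for i b
    by (simp add: matrix_matrix_mult_def transpose_def e1 if_distrib[of "\<lambda>x. x * _"] cong: if_cong)
  then show ?thesis
    by (simp add: act_def matrix_matrix_mult_def[of _ "Kmat \<sigma>"] e1 
         if_distrib[of "\<lambda>x. _ * x"] cong: if_cong)
qed

lemma Lspace_iff: "Q \<in> Lspace \<longleftrightarrow> (\<forall>i. (\<Sum>j\<in>UNIV. Q $ i $ j) = 0)"
  by (simp add: Lspace_def matrix_vector_mult_def ones_def vec_eq_iff)

lemma Wn_iff: "Q \<in> Wn \<longleftrightarrow> (\<forall>i. (\<Sum>j\<in>UNIV. Q $ i $ j) = 0) \<and> (\<forall>i j. Q $ i $ j = Q $ j $ i)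
   \<and> (\<forall>i. Q $ i $ i = 0)"
  by (auto simp add: Wn_def Lspace_iff vec_eq_iff transpose_def)

lemma subspace_Wn: "subspace Wn"
  unfolding subspace_def by (auto simp: Wn_iff sum.distrib sum_distrib_left[symmetric])

lemma Wn_act:
  assumes "\<sigma> permutes (UNIV::'n::finite set)" "X \<in> (Wn::(real^'n^'n) set)"
  shows "act \<sigma> X \<in> Wn"
proof -
  have b: "bij (inv \<sigma>)" using assms permutes_bij bij_imp_bij_inv by blast
  have "(\<Sum>j\<in>UNIV. X $ inv \<sigma> i $ inv \<sigma> j) = (\<Sum>j\<in>UNIV. X $ inv \<sigma> i $ j)" for i
    using sum.reindex_bij_betw[of "inv \<sigma>" UNIV UNIV "\<lambda>j. X $ inv \<sigma> i $ j"] b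
    by (simp add: bij_betw_def)
  moreover have "\<forall>i. (\<Sum>j\<in>UNIV. X $ i $ j) = 0" "\<forall>i j. X $ i $ j = X $ j $ i" "\<forall>i. X $ i $ i = 0"
    using assms(2) unfolding Wn_iff by auto
  ultimately show ?thesis using assms(1) unfolding Wn_iff act_nth[OF assms(1)] by metis
qed

lemma Sn_Wn: "Sn_submodule (Wn::(real^'n::finite^'n) set)"
  unfolding Sn_submodule_def using subspace_Wn Wn_act by (auto simp: Wn_def)


definition emat :: "'n::finite \<Rightarrow> 'n \<Rightarrow> real^'n^'n" where
  "emat p q = (\<chi> u v. if (u = p \<and> v = q) \<or> (u = q \<and> v = p) then 1 else 0)"

definition Gm :: "'n::finite \<Rightarrow> 'n \<Rightarrow> 'n \<Rightarrow> 'n \<Rightarrow> real^'n^'n" where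
  "Gm i j k l = emat i j + emat k l - emat i k - emat j l"

definition Gset :: "(real^'n::finite^'n) set" where
  "Gset = {Gm i j k l | i j k l. distinct [i,j,k,l]}"

lemma emat_nth: "emat p q $ u $ v = (if (u = p \<and> v = q) \<or> (u = q \<and> v = p) then 1 else 0)"
  by (simp add: emat_def)

lemma emat_sym: "emat p q = emat q p"
  by (auto simp add: emat_def vec_eq_iff)

lemma emat_tr: "emat p q $ u $ v = emat p q $ v $ u"
  by (simp add: emat_nth conj_commute disj_commute)

lemma emat_diag: "p \<noteq> q \<Longrightarrow> emat p q $ u $ u = 0"
  by (simp add: emat_nth)

lemma emat_rowsum:
  assumes "p \<noteq> q"
  shows "(\<Sum>v\<in>UNIV. emat p q $ u $ v) = (if u = p then 1 else 0) + (if u = q then 1 else 0)"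
proof -
  have "emat p q $ u $ v = (if u = p \<and> v = q then 1 else 0) + (if u = q \<and> v = p then 1 else 0)" for v
    using assms by (auto simp: emat_nth)
  then show ?thesis by (simp add: sum.distrib)
qed

lemma Gm_Wn:
  assumes "distinct [i,j,k,l]"
  shows "Gm i j k l \<in> Wn"
proof -
  have "(\<Sum>v\<in>UNIV. Gm i j k l $ u $ v) = 0" for u
    using assms by (simp add: Gm_def sum.distrib sum_subtractf emat_rowsum)
  moreover have "Gm i j k l $ u $ v = Gm i j k l $ v $ u" for u v
    by (simp add: Gm_def) (metis emat_tr)
  moreover have "Gm i j k l $ u $ u = 0" for u
    using assms by (simp add: Gm_def emat_diag)
  ultimately show ?thesis unfolding Wn_iff by blast
qed

lemma Gset_Wn: "Gset \<subseteq> Wn"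
  using Gm_Wn by (auto simp: Gset_def)

lemma span_Gset_Wn: "span Gset \<subseteq> Wn"
  by (rule span_minimal[OF Gset_Wn subspace_Wn])

lemma Gm_in: "distinct [i,j,k,l] \<Longrightarrow> Gm i j k l \<in> span Gset"
  by (rule span_base) (auto simp: Gset_def)

lemma dsum:
  fixes g :: "'n::finite \<Rightarrow> 'n \<Rightarrow> real"
  shows "(\<Sum>p\<in>UNIV. \<Sum>q\<in>UNIV. (if p = a \<and> q = b then g p q else 0)) = g a b"
proof -
  have "(\<Sum>q\<in>UNIV. (if p = a \<and> q = b then g p q else 0)) = (if p = a then g p b else 0)" for p
    by (cases "p = a") simp_all
  then show ?thesis by simp
qed

lemma emat_diag': "emat p q $ u $ u = (if p = u \<and> q = u then 1 else 0)"
  unfolding emat_nth by (rule if_cong) auto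

lemma emat_off: "u \<noteq> v \<Longrightarrow> emat p q $ u $ v = (if p = u \<and> q = v then 1 else 0) + (if p = v \<and> q = u then 1 else 0)"
  unfolding emat_nth by (cases "p = u"; cases "q = v"; cases "p = v"; cases "q = u"; simp)

lemma t1: "((x::real) / 2) * emat p q $ u $ u = (if p = u \<and> q = u then x / 2 else 0)"
      by (simp add: emat_diag')
lemma t2: "u \<noteq> v \<Longrightarrow> ((x::real) / 2) * emat p q $ u $ v = (if p = u \<and> q = v then x / 2 else 0)
       + (if p = v \<and> q = u then x / 2 else 0)"
      by (simp add: emat_off distrib_left)
lemma s1: fixes Q :: "real^'n::finite^'n" shows "(\<Sum>p\<in>UNIV. \<Sum>q\<in>UNIV. (Q $ p $ q / 2) * emat p q $ u $ u) = Q $ u $ u / 2"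
  apply (simp only: t1)
  apply (rule dsum)
  done
lemma s2: fixes Q :: "real^'n::finite^'n" assumes "u \<noteq> v"
  shows "(\<Sum>p\<in>UNIV. \<Sum>q\<in>UNIV. (Q $ p $ q / 2) * emat p q $ u $ v) = Q $ u $ v / 2 + Q $ v $ u / 2"
  apply (simp only: t2[OF assms] sum.distrib)
  apply (simp only: dsum)
  done

lemma expand:
  fixes Q :: "real^'n::finite^'n"
  assumes "\<forall>i j. Q $ i $ j = Q $ j $ i" "\<forall>i. Q $ i $ i = 0"
  shows "Q = (\<Sum>p\<in>UNIV. \<Sum>q\<in>UNIV. (Q $ p $ q / 2) *\<^sub>R emat p q)"
proof -
  have "(\<Sum>p\<in>UNIV. \<Sum>q\<in>UNIV. (Q $ p $ q / 2) * emat p q $ u $ v) = Q $ u $ v" for u v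
  proof (cases "u = v")
    case True
    then show ?thesis using s1[of Q u] assms(2) by simp
  next
    case False
    moreover have "Q $ v $ u = Q $ u $ v" using assms(1) by blast
    ultimately show ?thesis using s2[of u v Q] by simp
  qed
  then show ?thesis unfolding vec_eq_iff by simp
qed


definition Dm :: "'n::finite \<Rightarrow> 'n \<Rightarrow> 'n \<Rightarrow> real^'n^'n" where
  "Dm x p q = emat p q - emat p x - emat q x"

lemma DD: "Dm x p q - Dm x p r = Gm q p x r"
proof -
  have "Gm q p x r = emat p q + emat r x - emat q x - emat p r"
    unfolding Gm_def using emat_sym[of q p] emat_sym[of x r] by simp
  then show ?thesis unfolding Dm_def by (simp add: algebra_simps)
qed

lemma Dsym: "Dm x p q = Dm x q p"
  unfolding Dm_def using emat_sym[of p q] by (simp add: algebra_simps)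

lemma Dspan:
  assumes "distinct [x,y,z]" "p \<noteq> q" "p \<noteq> x" "q \<noteq> x"
  shows "Dm x p q - Dm x y z \<in> span Gset"
proof -
  have G: "\<And>i j k l. distinct [i,j,k,l] \<Longrightarrow> Gm i j k l \<in> span Gset" by (rule Gm_in)
  consider "p = y \<and> q = z" | "p = z \<and> q = y" | "p = y \<and> q \<noteq> z" | "q = y \<and> p \<noteq> z"
    | "p = z \<and> q \<noteq> y" | "q = z \<and> p \<noteq> y" | "p \<notin> {y,z} \<and> q \<notin> {y,z}" by blast
  then show ?thesis
  proof cases
    case 1 then show ?thesis by (simp add: span_zero)
  next
    case 2 then show ?thesis using Dsym[of x z y] by (simp add: span_zero)
  next
    case 3
    then have "Dm x p q - Dm x y z = Gm q y x z" using DD[of x y q z] by simp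
    then show ?thesis using G[of q y x z] 3 assms by auto
  next
    case 4
    then have "Dm x p q - Dm x y z = Gm p y x z" using DD[of x y p z] Dsym[of x p q] by simp
    then show ?thesis using G[of p y x z] 4 assms by auto
  next
    case 5
    then have "Dm x p q - Dm x y z = Gm q z x y" using DD[of x z q y] Dsym[of x y z] by simp
    then show ?thesis using G[of q z x y] 5 assms by auto
  next
    case 6
    then have "Dm x p q - Dm x y z = Gm p z x y" using DD[of x z p y] Dsym[of x y z] Dsym[of x p q] by simp
    then show ?thesis using G[of p z x y] 6 assms by auto
  next
    case 7
    have "Dm x p q - Dm x y z = (Dm x p q - Dm x p y) + (Dm x y p - Dm x y z)"
      using Dsym[of x p y] by simp
    also have "\<dots> = Gm q p x y + Gm p y x z" using DD[of x p q y] DD[of x y p z] by simp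
    finally show ?thesis using G[of q p x y] G[of p y x z] 7 assms
      by (auto intro!: span_add)
  qed
qed

definition fx :: "'n::finite \<Rightarrow> 'n \<Rightarrow> 'n \<Rightarrow> real^'n^'n" where
  "fx x y z = (1/2) *\<^sub>R (emat x y + emat x z - emat y z)"

definition ff :: "'n::finite \<Rightarrow> 'n \<Rightarrow> 'n \<Rightarrow> 'n \<Rightarrow> real^'n^'n" where
  "ff x y z p = (if p = x then fx x y z else emat p x - fx x y z)"

lemma key:
  assumes "distinct [x,y,z]" "p \<noteq> q"
  shows "emat p q - ff x y z p - ff x y z q \<in> span Gset"
proof (cases "p = x \<or> q = x")
  case True
  then have "emat p q - ff x y z p - ff x y z q = 0"
    using assms emat_sym[of p q] by (auto simp: ff_def)
  then show ?thesis by (simp add: span_zero)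
next
  case False
  define W where "W = emat x y + emat x z - emat y z"
  have s1: "emat y x = emat x y" "emat z x = emat x z" using emat_sym by auto
  have "Dm x y z = emat y z - emat y x - emat z x" by (simp add: Dm_def)
  also have "\<dots> = emat y z - emat x y - emat x z" using s1 by metis
  also have "\<dots> = - W" by (simp add: W_def)
  finally have w: "Dm x y z = - W" .
  have h: "(1/2) *\<^sub>R W + (1/2) *\<^sub>R W = W"
    by (simp add: scaleR_left_distrib[symmetric])
  have "emat p q - ff x y z p - ff x y z q = emat p q - emat p x - emat q x + ((1/2) *\<^sub>R W + (1/2) *\<^sub>R W)"
    using False unfolding ff_def fx_def W_def[symmetric] by (simp add: algebra_simps)
  also have "\<dots> = Dm x p q - Dm x y z" unfolding h w by (simp add: Dm_def)
  finally have "emat p q - ff x y z p - ff x y z q = Dm x p q - Dm x y z" .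
  then show ?thesis using Dspan[of x y z p q] False assms by simp
qed

lemma Wn_span:
  fixes Q :: "real^'n::finite^'n" and x y z :: 'n
  assumes "distinct [x,y,z]" "Q \<in> Wn"
  shows "Q \<in> span Gset"
proof -
  have rs: "\<forall>i. (\<Sum>j\<in>UNIV. Q $ i $ j) = 0" and sy: "\<forall>i j. Q $ i $ j = Q $ j $ i"
    and dg: "\<forall>i. Q $ i $ i = 0" using assms(2) unfolding Wn_iff by auto
  define c where "c p q = Q $ p $ q / 2" for p q
  define f where "f = ff x y z"
  have cs: "(\<Sum>q\<in>UNIV. c p q) = 0" for p
    using rs unfolding c_def by (simp add: sum_divide_distrib[symmetric])
  have cs2: "(\<Sum>p\<in>UNIV. c p q) = 0" for q
  proof -
    have "(\<Sum>p\<in>UNIV. c p q) = (\<Sum>p\<in>UNIV. c q p)"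
      by (rule sum.cong) (use sy in \<open>auto simp: c_def\<close>)
    then show ?thesis using cs by simp
  qed
  have e: "Q = (\<Sum>p\<in>UNIV. \<Sum>q\<in>UNIV. c p q *\<^sub>R emat p q)"
    using expand[OF sy dg] unfolding c_def .
  have split: "c p q *\<^sub>R emat p q = c p q *\<^sub>R (emat p q - f p - f q) + (c p q *\<^sub>R f p + c p q *\<^sub>R f q)" for p q :: 'n
    by (simp add: algebra_simps)
  have z1: "(\<Sum>p\<in>UNIV. \<Sum>q\<in>UNIV. c p q *\<^sub>R f p) = 0"
    by (simp add: scaleR_sum_left[symmetric] cs)
  have z2: "(\<Sum>p\<in>UNIV. \<Sum>q\<in>UNIV. c p q *\<^sub>R f q) = 0"
    by (subst sum.swap) (simp add: scaleR_sum_left[symmetric] cs2)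
  have "Q = (\<Sum>p\<in>UNIV. \<Sum>q\<in>UNIV. c p q *\<^sub>R (emat p q - f p - f q))"
    unfolding e split sum.distrib z1 z2 by simp
  moreover have "c p q *\<^sub>R (emat p q - f p - f q) \<in> span Gset" for p q :: 'n
  proof (cases "p = q")
    case True then show ?thesis using dg by (simp add: c_def span_zero)
  next
    case False then show ?thesis unfolding f_def using key[OF assms(1) False] span_scale by blast
  qed
  ultimately show ?thesis by (metis (no_types, lifting) span_sum)
qed


lemma Lmat_diff:
  assumes "distinct [i,j,k,l]"
  shows "Lmat (Transposition.transpose i j \<circ> Transposition.transpose k l)
           - Lmat (Transposition.transpose i k \<circ> Transposition.transpose j l) = Gm i j k l"
proof -
  have "(if (Transposition.transpose i j \<circ> Transposition.transpose k l) u = v then 1 else 0)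
      - (if (Transposition.transpose i k \<circ> Transposition.transpose j l) u = v then 1 else 0)
      = Gm i j k l $ u $ v" for u v :: 'a
    using assms
    by (cases "u = i"; cases "u = j"; cases "u = k"; cases "u = l"; simp add: Gm_def emat_nth; auto)
  then show ?thesis by (simp add: vec_eq_iff Lmat_def)
qed

lemma Lset_eq: "{Lmat (Transposition.transpose i j \<circ> Transposition.transpose k l)
           - Lmat (Transposition.transpose i k \<circ> Transposition.transpose j l)
           | i j k l. distinct [i, j, k, l]} = (Gset :: (real^'n::finite^'n) set)"
proof -
  have "\<And>i j k l. distinct [i,j,k,l] \<Longrightarrow> Lmat (Transposition.transpose i j \<circ> Transposition.transpose k l)
           - Lmat (Transposition.transpose i k \<circ> Transposition.transpose j l) = (Gm i j k l :: real^'n^'n)"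
    by (rule Lmat_diff)
  note L = this
  show ?thesis unfolding Gset_def
  proof (intro set_eqI iffI)
    fix x :: "real^'n^'n" assume "x \<in> {Lmat (Transposition.transpose i j \<circ> Transposition.transpose k l)
           - Lmat (Transposition.transpose i k \<circ> Transposition.transpose j l)
           | i j k l. distinct [i, j, k, l]}"
    then obtain i j k l where "distinct [i,j,k,l]" "x = Lmat (Transposition.transpose i j \<circ> Transposition.transpose k l)
           - Lmat (Transposition.transpose i k \<circ> Transposition.transpose j l)" by blast
    then show "x \<in> {Gm i j k l | i j k l. distinct [i,j,k,l]}" using L[of i j k l] by blast
  next
    fix x :: "real^'n^'n" assume "x \<in> {Gm i j k l | i j k l. distinct [i,j,k,l]}"
    then obtain i j k l where "distinct [i,j,k,l]" "x = Gm i j k l" by blast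
    then show "x \<in> {Lmat (Transposition.transpose i j \<circ> Transposition.transpose k l)
           - Lmat (Transposition.transpose i k \<circ> Transposition.transpose j l)
           | i j k l. distinct [i, j, k, l]}" using L[of i j k l] by (metis (mono_tags, lifting) CollectI)
  qed
qed

definition phi :: "real^'n::finite^'n \<Rightarrow> real^('n set)" where
  "phi X = (\<chi> S. if card S = 2 then (\<Sum>p\<in>S. \<Sum>q\<in>S. X $ p $ q) / 2 else 0)"

lemma phi_nth: "phi X $ S = (if card S = 2 then (\<Sum>p\<in>S. \<Sum>q\<in>S. X $ p $ q) / 2 else 0)"
  by (simp add: phi_def)

lemma linear_phi: "linear phi"
proof (rule linearI)
  show "phi (b1 + b2) = phi b1 + phi b2" for b1 b2
    by (simp add: vec_eq_iff phi_nth sum.distrib add_divide_distrib)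
  show "phi (r *\<^sub>R b) = r *\<^sub>R phi b" for r b
    by (simp add: vec_eq_iff phi_nth sum_distrib_left)
qed

lemma phi_pair:
  assumes "u \<noteq> v"
  shows "phi X $ {u,v} = (X $ u $ u + X $ u $ v + X $ v $ u + X $ v $ v) / 2"
  using assms by (simp add: phi_nth)

lemma tabloid_nth: "tabloid T $ S = (if S = T then 1 else 0)"
  by (simp add: tabloid_def)

lemma phi_emat:
  assumes "p \<noteq> q"
  shows "phi (emat p q) = tabloid {p,q}"
proof -
  have "phi (emat p q) $ S = tabloid {p,q} $ S" for S
  proof (cases "card S = 2")
    case True
    then obtain u v where S: "S = {u,v}" "u \<noteq> v" by (auto simp: card_2_iff)
    have "emat p q $ u $ v = (if S = {p,q} then 1 else 0)" "emat p q $ v $ u = (if S = {p,q} then 1 else 0)"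
      unfolding S(1) emat_nth doubleton_eq_iff by auto
    then show ?thesis using S assms by (simp add: phi_pair emat_diag tabloid_nth)
  next
    case False
    then have "S \<noteq> {p,q}" using assms by auto
    then show ?thesis using False by (simp add: phi_nth tabloid_nth)
  qed
  then show ?thesis by (simp add: vec_eq_iff)
qed

lemma phi_Gm:
  assumes "distinct [i,j,k,l]"
  shows "phi (Gm i j k l) = tabloid {i,j} + tabloid {k,l} - tabloid {i,k} - tabloid {j,l}"
  using assms unfolding Gm_def
  by (simp add: linear_diff[OF linear_phi] linear_add[OF linear_phi] phi_emat)

lemma phi_Gset: "phi ` (Gset :: (real^'n::finite^'n) set) = {polytabloid a b i j | a b i j. distinct [a,b,i,j]}"
proof -
  have P: "phi (Gm i j b a :: real^'n^'n) = polytabloid a b i j" if "distinct [a,b,i,j]" for a b i j :: 'n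
  proof -
    have d: "distinct [i,j,b,a]" using that by auto
    have "{b,a} = {a,b}" "{j,a} = {a,j}" by auto
    then show ?thesis unfolding phi_Gm[OF d] polytabloid_def by (simp add: algebra_simps)
  qed
  show ?thesis
  proof (intro set_eqI iffI)
    fix y assume "y \<in> phi ` (Gset :: (real^'n::finite^'n) set)"
    then obtain i j k l :: 'n where d: "distinct [i,j,k,l]" "y = phi (Gm i j k l)"
      unfolding Gset_def by blast
    have "distinct [l,k,i,j]" using d by auto
    then have "y = polytabloid l k i j" using P[of l k i j] d by simp
    then show "y \<in> {polytabloid a b i j | a b i j. distinct [a,b,i,j]}"
      using \<open>distinct [l,k,i,j]\<close> by blast
  next
    fix y :: "real^('n set)" assume "y \<in> {polytabloid a b i j | a b i j. distinct [a,b,i,j]}"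
    then obtain a b i j :: 'n where d: "distinct [a,b,i,j]" "y = polytabloid a b i j" by blast
    have "distinct [i,j,b,a]" using d by auto
    then have "Gm i j b a \<in> (Gset :: (real^'n::finite^'n) set)" unfolding Gset_def by blast
    then show "y \<in> phi ` (Gset :: (real^'n::finite^'n) set)" using P[OF d(1)] d(2) by (metis image_eqI)
  qed
qed


lemma three:
  assumes "CARD('n::finite) \<ge> 3"
  obtains x y z :: "'n::finite" where "distinct [x,y,z]"
proof -
  obtain x :: 'n where True by blast
  have "UNIV - {x} \<noteq> {}"
  proof
    assume "UNIV - {x} = {}" then have "(UNIV::'n set) = {x}" by auto
    then have "card (UNIV::'n set) = card {x}" by (rule arg_cong)
    then have "CARD('n) = 1" by simp
    then show False using assms by simp
  qed
  then obtain y where y: "y \<noteq> x" by blast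
  have "UNIV - {x,y} \<noteq> {}"
  proof
    assume "UNIV - {x,y} = {}" then have "(UNIV::'n set) = {x,y}" by auto
    moreover have "card {x,y} \<le> 2" by (simp add: card_insert_if)
    ultimately have "CARD('n) \<le> 2" by simp
    then show False using assms by simp
  qed
  then obtain z where "z \<noteq> x" "z \<noteq> y" by blast
  then have "distinct [x,y,z]" using y by simp
  then show ?thesis by (rule that)
qed

lemma Wn_eq:
  assumes "CARD('n::finite) \<ge> 3"
  shows "(Wn :: (real^'n^'n) set) = span Gset"
proof -
  obtain x y z :: 'n where d: "distinct [x,y,z]" using three[OF assms] by blast
  show ?thesis
  proof (rule subset_antisym)
    show "(Wn :: (real^'n^'n) set) \<subseteq> span Gset"
    proof
      fix Q :: "real^'n^'n" assume "Q \<in> Wn" then show "Q \<in> span Gset" by (rule Wn_span[OF d])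
    qed
  qed (rule span_Gset_Wn)
qed

lemma phi_Wn:
  assumes "CARD('n::finite) \<ge> 3"
  shows "phi ` (Wn :: (real^'n^'n) set) = specht"
  unfolding Wn_eq[OF assms] specht_def span_linear_image[OF linear_phi, symmetric] phi_Gset ..

lemma inj_phi: "inj_on phi (Wn :: (real^'n::finite^'n) set)"
proof (rule inj_onI)
  fix X Y :: "real^'n^'n" assume X: "X \<in> Wn" and Y: "Y \<in> Wn" and e: "phi X = phi Y"
  define Z where "Z = X - Y"
  have "Z \<in> Wn" unfolding Z_def by (rule subspace_diff[OF subspace_Wn X Y])
  then have sy: "\<forall>i j. Z $ i $ j = Z $ j $ i" and dg: "\<forall>i. Z $ i $ i = 0" unfolding Wn_iff by auto
  have p0: "phi Z = 0" unfolding Z_def using e by (simp add: linear_diff[OF linear_phi])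
  have "Z $ u $ v = 0" for u v
  proof (cases "u = v")
    case True then show ?thesis using dg by simp
  next
    case False
    have "phi Z $ {u,v} = (Z $ u $ u + Z $ u $ v + Z $ v $ u + Z $ v $ v) / 2" by (rule phi_pair[OF False])
    moreover have "Z $ v $ u = Z $ u $ v" using sy by blast
    ultimately show ?thesis using p0 dg by simp
  qed
  then have "Z = 0" by (simp add: vec_eq_iff)
  then show "X = Y" unfolding Z_def by simp
qed

lemma phi_equiv:
  assumes "\<sigma> permutes (UNIV::'n::finite set)"
  shows "phi (act \<sigma> X) = act2 \<sigma> (phi (X :: real^'n^'n))"
proof -
  have b: "bij (inv \<sigma>)" using assms permutes_bij bij_imp_bij_inv by blast
  then have inj: "inj_on (inv \<sigma>) A" for A by (metis bij_def inj_on_subset subset_UNIV)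
  have "phi X $ (inv \<sigma> ` S) = phi (act \<sigma> X) $ S" for S
  proof -
    have c: "card (inv \<sigma> ` S) = card S" using inj by (rule card_image)
    have "(\<Sum>p\<in>inv \<sigma> ` S. \<Sum>q\<in>inv \<sigma> ` S. X $ p $ q) = (\<Sum>p\<in>S. \<Sum>q\<in>S. X $ inv \<sigma> p $ inv \<sigma> q)"
      by (simp add: sum.reindex[OF inj])
    then show ?thesis by (simp add: phi_nth c act_nth[OF assms])
  qed
  then show ?thesis by (simp add: vec_eq_iff act2_def)
qed

lemma iso_Wn:
  assumes "CARD('n::finite) \<ge> 3"
  shows "iso_to_specht (Wn :: (real^'n^'n) set)"
  unfolding iso_to_specht_def
  using linear_phi inj_phi phi_Wn[OF assms] phi_equiv by (metis bij_betw_def)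


lemma act2_tabloid:
  assumes "bij \<sigma>"
  shows "act2 \<sigma> (tabloid T) = tabloid (\<sigma> ` T)"
proof -
  have "(inv \<sigma> ` S = T) = (S = \<sigma> ` T)" for S
  proof
    assume "inv \<sigma> ` S = T"
    then have "\<sigma> ` T = \<sigma> ` inv \<sigma> ` S" by simp
    also have "\<dots> = S" using assms by (simp add: bij_is_surj image_f_inv_f)
    finally show "S = \<sigma> ` T" by simp
  next
    assume "S = \<sigma> ` T"
    then show "inv \<sigma> ` S = T" using assms by (simp add: bij_is_inj image_inv_f_f)
  qed
  then show ?thesis by (simp add: vec_eq_iff act2_def tabloid_nth)
qed

lemma act2_add: "act2 \<sigma> (f + g) = act2 \<sigma> f + act2 \<sigma> g"
  by (simp add: vec_eq_iff act2_def)

lemma act2_diff: "act2 \<sigma> (f - g) = act2 \<sigma> f - act2 \<sigma> g"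
  by (simp add: vec_eq_iff act2_def)

lemma act2_poly:
  assumes "bij \<sigma>"
  shows "act2 \<sigma> (polytabloid a b i j) = polytabloid (\<sigma> a) (\<sigma> b) (\<sigma> i) (\<sigma> j)"
  unfolding polytabloid_def act2_add act2_diff act2_tabloid[OF assms] by simp

lemma d4: "distinct [a,b,i,j] \<Longrightarrow> a \<noteq> b \<and> b \<noteq> a \<and> a \<noteq> i \<and> i \<noteq> a \<and> a \<noteq> j \<and> j \<noteq> a
   \<and> b \<noteq> i \<and> i \<noteq> b \<and> b \<noteq> j \<and> j \<noteq> b \<and> i \<noteq> j \<and> j \<noteq> i"
  by auto

lemma R1:
  assumes "distinct [a,b,i,j]"
  shows "act2 (Transposition.transpose a i) (polytabloid a b i j) = (-1) *\<^sub>R polytabloid a b i j"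
proof -
  have "act2 (Transposition.transpose a i) (polytabloid a b i j) = polytabloid i b a j"
    using d4[OF assms] by (simp add: act2_poly)
  then show ?thesis by (simp add: polytabloid_def algebra_simps)
qed

lemma R2:
  assumes "distinct [a,b,i,j]"
  shows "act2 (Transposition.transpose b j) (polytabloid a b i j) = (-1) *\<^sub>R polytabloid a b i j"
proof -
  have "act2 (Transposition.transpose b j) (polytabloid a b i j) = polytabloid a j i b"
    using d4[OF assms] by (simp add: act2_poly)
  then show ?thesis by (simp add: polytabloid_def algebra_simps)
qed

lemma R3:
  assumes "distinct [a,b,i,j]"
  shows "act2 (Transposition.transpose a b \<circ> Transposition.transpose i j) (polytabloid a b i j) = 1 *\<^sub>R polytabloid a b i j"
proof -
  have "bij (Transposition.transpose a b \<circ> Transposition.transpose i j)"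
    by (simp add: bij_comp)
  then have "act2 (Transposition.transpose a b \<circ> Transposition.transpose i j) (polytabloid a b i j) = polytabloid b a j i"
    using d4[OF assms] by (simp add: act2_poly)
  moreover have "{j,i} = {i,j}" "{b,i} = {i,b}" "{j,a} = {a,j}" "{b,a} = {a,b}" by auto
  ultimately show ?thesis by (simp add: polytabloid_def algebra_simps)
qed

lemma rho_inv:
  assumes "distinct [a,b,i,j]"
  shows "inv (Transposition.transpose a b \<circ> Transposition.transpose i j) = Transposition.transpose a b \<circ> Transposition.transpose i j"
proof -
  have rr: "(Transposition.transpose a b \<circ> Transposition.transpose i j) \<circ> (Transposition.transpose a b \<circ> Transposition.transpose i j) = id"
  proof
    fix u show "((Transposition.transpose a b \<circ> Transposition.transpose i j) \<circ> (Transposition.transpose a b \<circ> Transposition.transpose i j)) u = id u"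
      using d4[OF assms] by (cases "u = a"; cases "u = b"; cases "u = i"; cases "u = j"; simp)
  qed
  then show ?thesis using inv_unique_comp[OF rr rr] by simp
qed

lemma tr_permutes: "Transposition.transpose a b permutes UNIV"
  by (simp add: permutes_swap_id)

lemma rho_permutes: "(Transposition.transpose a b \<circ> Transposition.transpose i j) permutes UNIV"
  by (simp add: permutes_compose permutes_swap_id)

lemma rel_Wn:
  fixes X :: "real^'n::finite^'n"
  assumes d: "distinct [a,b,i,j]" and L: "X \<in> Lspace"
    and E1: "act (Transposition.transpose a i) X = (-1) *\<^sub>R X"
    and E2: "act (Transposition.transpose b j) X = (-1) *\<^sub>R X"
    and E3: "act (Transposition.transpose a b \<circ> Transposition.transpose i j) X = 1 *\<^sub>R X"
  shows "X \<in> Wn"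
proof -
  note n = d4[OF d]
  have F1: "X $ Transposition.transpose a i p $ Transposition.transpose a i q = - X $ p $ q" for p q
    using arg_cong[OF E1, of "\<lambda>M. M $ p $ q"] by (simp add: act_nth[OF tr_permutes])
  have F2: "X $ Transposition.transpose b j p $ Transposition.transpose b j q = - X $ p $ q" for p q
    using arg_cong[OF E2, of "\<lambda>M. M $ p $ q"] by (simp add: act_nth[OF tr_permutes])
  have F3: "X $ (Transposition.transpose a b \<circ> Transposition.transpose i j) p $ (Transposition.transpose a b \<circ> Transposition.transpose i j) q = X $ p $ q" for p q
    using arg_cong[OF E3, of "\<lambda>M. M $ p $ q"] by (simp only: act_nth[OF rho_permutes] rho_inv[OF d] scaleR_one)
  have Z1: "X $ p $ q = 0" if "p \<noteq> a" "p \<noteq> i" "q \<noteq> a" "q \<noteq> i" for p q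
    using F1[of p q] that by simp
  have Z2: "X $ p $ q = 0" if "p \<noteq> b" "p \<noteq> j" "q \<noteq> b" "q \<noteq> j" for p q
    using F2[of p q] that by simp
  have dg: "X $ p $ p = 0" for p
    using Z1[of p p] Z2[of p p] n by blast
  have s1: "X $ a $ b = X $ b $ a" using F3[of a b] n by simp
  have s2: "X $ a $ j = X $ j $ a" using F3[of a j] F1[of b i] F2[of b a] n by simp
  have s3: "X $ i $ b = X $ b $ i" using F3[of i b] F1[of j a] F2[of j i] n by simp
  have s4: "X $ i $ j = X $ j $ i" using F3[of i j] n by simp
  have sy: "X $ p $ q = X $ q $ p" for p q
  proof (cases "(p \<in> {a,i} \<and> q \<in> {b,j}) \<or> (p \<in> {b,j} \<and> q \<in> {a,i})")
    case True
    then show ?thesis using s1 s2 s3 s4 by auto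
  next
    case False
    then have "(p \<noteq> a \<and> p \<noteq> i \<and> q \<noteq> a \<and> q \<noteq> i) \<or> (p \<noteq> b \<and> p \<noteq> j \<and> q \<noteq> b \<and> q \<noteq> j)"
      using n by auto
    then show ?thesis using Z1[of p q] Z1[of q p] Z2[of p q] Z2[of q p] by auto
  qed
  show ?thesis using L unfolding Wn_iff Lspace_iff using sy dg by blast
qed


lemma unique:
  assumes c: "CARD('n::finite) \<ge> 3" and S: "Sn_submodule (U :: (real^'n^'n) set)" and I: "iso_to_specht U"
  shows "U = Wn"
proof -
  have sU: "subspace U" and UL: "U \<subseteq> Lspace"
    and inv: "\<And>\<sigma> X. \<sigma> permutes (UNIV::'n set) \<Longrightarrow> X \<in> U \<Longrightarrow> act \<sigma> X \<in> U"
    using S unfolding Sn_submodule_def by auto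
  obtain \<psi> :: "real^'n^'n \<Rightarrow> real^('n set)" where lin: "linear \<psi>" and bb: "bij_betw \<psi> U specht"
    and eq: "\<And>\<sigma> X. \<sigma> permutes (UNIV::'n set) \<Longrightarrow> X \<in> U \<Longrightarrow> \<psi> (act \<sigma> X) = act2 \<sigma> (\<psi> X)"
    using I unfolding iso_to_specht_def by blast
  have inj: "inj_on \<psi> U" and img: "\<psi> ` U = specht" using bb by (auto simp: bij_betw_def)
  have sc: "act \<tau> X = c *\<^sub>R X" if "\<tau> permutes UNIV" "X \<in> U" "act2 \<tau> (\<psi> X) = c *\<^sub>R \<psi> X" for \<tau> X c
  proof -
    have "act \<tau> X \<in> U" using inv that by blast
    moreover have "c *\<^sub>R X \<in> U" using sU that(2) by (rule subspace_scale)
    moreover have "\<psi> (act \<tau> X) = \<psi> (c *\<^sub>R X)"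
      using eq[OF that(1,2)] that(3) by (simp add: linear_scale[OF lin])
    ultimately show ?thesis using inj by (meson inj_onD)
  qed
  define P where "P = {polytabloid a b i j | a b i j. distinct [a,b,(i::'n),j]}"
  define B where "B = {X \<in> U. \<exists>a b i j. distinct [a,b,i,j] \<and> \<psi> X = polytabloid a b i j}"
  have BW: "B \<subseteq> Wn"
  proof
    fix X assume "X \<in> B"
    then obtain a b i j where X: "X \<in> U" "distinct [a,b,i,j]" "\<psi> X = polytabloid a b i j"
      unfolding B_def by blast
    show "X \<in> Wn"
    proof (rule rel_Wn[OF X(2)])
      show "X \<in> Lspace" using X UL by blast
      show "act (Transposition.transpose a i) X = (-1) *\<^sub>R X"
        by (rule sc[OF tr_permutes X(1)]) (simp add: X(3) R1[OF X(2)])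
      show "act (Transposition.transpose b j) X = (-1) *\<^sub>R X"
        by (rule sc[OF tr_permutes X(1)]) (simp add: X(3) R2[OF X(2)])
      show "act (Transposition.transpose a b \<circ> Transposition.transpose i j) X = 1 *\<^sub>R X"
        by (rule sc[OF rho_permutes X(1)]) (simp only: X(3) R3[OF X(2)])
    qed
  qed
  have BU: "B \<subseteq> U" unfolding B_def by blast
  have PB: "\<psi> ` B = P"
  proof (intro set_eqI iffI)
    fix p assume "p \<in> \<psi> ` B"
    then obtain X where "X \<in> B" "p = \<psi> X" by blast
    then obtain a b i j where "distinct [a,b,i,j]" "p = polytabloid a b i j" unfolding B_def by auto
    then show "p \<in> P" unfolding P_def by blast
  next
    fix p assume p: "p \<in> P"
    then obtain a b i j where abij: "distinct [a,b,i,j]" "p = polytabloid a b i j" unfolding P_def by blast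
    have "p \<in> specht" unfolding specht_def using p unfolding P_def by (rule span_base)
    then obtain X where X: "X \<in> U" "\<psi> X = p" using img by (metis imageE)
    then have "X \<in> B" unfolding B_def using abij by auto
    then show "p \<in> \<psi> ` B" using X(2) by (metis image_eqI)
  qed
  have UW: "U \<subseteq> Wn"
  proof
    fix Y assume Y: "Y \<in> U"
    have "\<psi> Y \<in> specht" using imageI[OF Y, of \<psi>] img by simp
    then have "\<psi> Y \<in> span P" unfolding specht_def P_def .
    also have "span P = \<psi> ` span B" unfolding PB[symmetric] by (rule span_linear_image[OF lin])
    finally obtain Y' where Y': "Y' \<in> span B" "\<psi> Y' = \<psi> Y" by (metis imageE)
    have sB: "span B \<subseteq> U" using BU sU by (rule span_minimal)
    have "Y' = Y" by (rule inj_onD[OF inj Y'(2) subsetD[OF sB Y'(1)] Y])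
    moreover have "span B \<subseteq> Wn" using BW subspace_Wn by (rule span_minimal)
    ultimately show "Y \<in> Wn" using Y'(1) by (metis subsetD)
  qed
  have d1: "dim (\<psi> ` U) = dim U"
  proof (rule dim_image_eq[OF lin])
    have "span U = U" using sU by (simp add: span_eq_iff)
    then show "inj_on \<psi> (span U)" using inj by (simp only:)
  qed
  have d2: "dim (phi ` (Wn :: (real^'n^'n) set)) = dim (Wn :: (real^'n^'n) set)"
  proof (rule dim_image_eq[OF linear_phi])
    have "span Wn = (Wn :: (real^'n^'n) set)" using subspace_Wn by (simp add: span_eq_iff)
    then show "inj_on phi (span (Wn :: (real^'n^'n) set))" using inj_phi by (simp only:)
  qed
  have "dim U = dim (Wn :: (real^'n^'n) set)" using d1 d2 img phi_Wn[OF c] by simp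
  then show ?thesis using subspace_dim_equal[OF sU subspace_Wn UW] by simp
qed

theorem mainTheorem12:
  assumes "CARD('n::finite) \<ge> 4"
  shows "Sn_submodule (Wn :: (real^'n^'n) set) \<and> iso_to_specht (Wn :: (real^'n^'n) set)
    \<and> (\<forall>U :: (real^'n^'n) set. Sn_submodule U \<and> iso_to_specht U \<longrightarrow> U = Wn)
    \<and> (Wn :: (real^'n^'n) set) = span {Lmat (Transposition.transpose i j \<circ> Transposition.transpose k l)
           - Lmat (Transposition.transpose i k \<circ> Transposition.transpose j l)
           | i j k l. distinct [i, j, k, l]}"
proof -
  have c: "CARD('n) \<ge> 3" using assms by simp
  have e: "(Wn :: (real^'n^'n) set) = span {Lmat (Transposition.transpose i j \<circ> Transposition.transpose k l)
           - Lmat (Transposition.transpose i k \<circ> Transposition.transpose j l)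
           | i j k l. distinct [i, j, k, l]}"
    unfolding Lset_eq by (rule Wn_eq[OF c])
  show ?thesis
    using Sn_Wn iso_Wn[OF c] unique[OF c] e by blast
qed

end
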